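(* Let $n$ be a positive integer, let $p\ge q$ be positive integers, and let $B$ be a $p\times q$ matrix. For each positive divisor $k$ of $n$, let $F_k$ be the symmetric block matrix of size $kq+\frac{n}{k}p$ whose block rows and columns have sizes, in order, $p$, then $q$ repeated $k$ times, then $p$ repeated $\frac{n}{k}-1$ times; the block in a size-$p$ block row and a size-$q$ block column is $B$, the block in a size-$q$ block row and a size-$p$ block column is $B^T$, and all other blocks are zero. That is, $$F_k=\begin{bmatrix} 0 & B & \cdots & B & 0 & \cdots & 0\\ B^T & 0 & \cdots & 0 & B^T & \cdots & B^T\\ \vdots & \vdots & \ddots & \vdots & \vdots & \ddots & \vdots\\ B^T & 0 & \cdots & 0 & B^T & \cdots & B^T\\ 0 & B & \cdots & B & 0 & \cdots & 0\\ \vdots & \vdots & \ddots & \vdots & \vdots & \ddots & \vdots\\ 0 & B & \cdots & B & 0 & \cdots & 0\end{bmatrix}.$$ Then the matrices $F_k\oplus 0_{(n-\frac{n}{k})p+(1-k)q}$, as $k$ ranges over all positive divisors of $n$, are pairwise cospectral.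
   Context: For matrices $X,Y$, $X\oplus Y=\begin{bmatrix} X&0\\0&Y\end{bmatrix}$; $0_m$ is the $m\times m$ zero matrix. Two square matrices are cospectral if they have the same eigenvalues with the same multiplicities. *)

theory Defs
  imports "Jordan_Normal_Form.Jordan_Normal_Form"
begin

definition dsum :: "'a::zero mat \<Rightarrow> 'a mat \<Rightarrow> 'a mat" where
  "dsum X Y = four_block_mat X (0\<^sub>m (dim_row X) (dim_col Y)) (0\<^sub>m (dim_row Y) (dim_col X)) Y"

text \<open>Cospectral: square matrices of the same size whose eigenvalues agree with
  (algebraic) multiplicities, i.e. every scalar has the same multiplicity as a root
  of the characteristic polynomial.\<close>
definition cospectral :: "'a::idom mat \<Rightarrow> 'a mat \<Rightarrow> bool" where
  "cospectral X Y \<longleftrightarrow> square_mat X \<and> square_mat Y \<and> dim_row X = dim_row Y \<and>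
     (\<forall>c. order c (char_poly X) = order c (char_poly Y))"

text \<open>Index i lies in a "p-block" iff i < p or i >= p + k*q; its offset inside its block
  is given by offP, resp. offQ for "q-blocks".\<close>
definition Fk :: "nat \<Rightarrow> nat \<Rightarrow> 'a::zero mat \<Rightarrow> 'a mat" where
  "Fk n k B = (let p = dim_row B; q = dim_col B; N = k * q + (n div k) * p;
     isP = (\<lambda>i. i < p \<or> p + k * q \<le> i);
     offP = (\<lambda>i. if i < p then i else (i - p - k * q) mod p);
     offQ = (\<lambda>i. (i - p) mod q)
   in mat N N (\<lambda>(i, j).
        if isP i \<and> \<not> isP j then B $$ (offP i, offQ j)
        else if \<not> isP i \<and> isP j then B $$ (offP j, offQ i)
        else 0))"

text \<open>Size of the zero padding: (n - n/k) p + (1 - k) q, which is a nonnegative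
  integer whenever p \<ge> q and k divides n (written with nat arithmetic).\<close>
definition pad_size :: "nat \<Rightarrow> nat \<Rightarrow> nat \<Rightarrow> nat \<Rightarrow> nat" where
  "pad_size n k p q = (n - n div k) * p + q - k * q"

end

theory Submission imports Defs begin

definition Cmat :: "nat \<Rightarrow> complex mat \<Rightarrow> complex mat" where
  "Cmat n B = (let p = dim_row B; q = dim_col B in mat (p+q) (p+q) (\<lambda>(i,j).
     if i < p then (if p \<le> j then of_nat n * B $$ (i, j - p) else 0)
     else (if j < p then B $$ (j, i - p) else 0)))"

lemma cp_block:
  fixes C :: "'a::idom mat"
  assumes C: "C \<in> carrier_mat a a" and D: "D \<in> carrier_mat b a" and E: "E \<in> carrier_mat b b"
  shows "char_poly (four_block_mat C (0\<^sub>m a b) D E) = char_poly C * char_poly E"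
proof -
  have "char_poly_matrix (four_block_mat C (0\<^sub>m a b) D E) =
    four_block_mat (char_poly_matrix C) (0\<^sub>m a b) (map_mat (\<lambda>x. [:-x:]) D) (char_poly_matrix E)"
    using C D E by (intro eq_matI) (auto simp: char_poly_matrix_def)
  then show ?thesis unfolding char_poly_def
    by (simp, subst det_four_block_mat_upper_right_zero[of _ a _ b], insert C D E, auto)
qed

locale fsetup =
  fixes B :: "complex mat" and p q k m :: nat
  assumes B: "B \<in> carrier_mat p q" and q0: "0 < q" and qp: "q \<le> p" and k0: "0 < k" and m0: "0 < m"
begin

definition "N0 = k*q + m*p"
definition "N = k*m*p + q"
definition "isP i = (i < p \<or> (p + k*q \<le> i \<and> i < N0))"
definition "isQ i = (p \<le> i \<and> i < p + k*q)"
definition "offP i = (if i < p then i else (i - p - k*q) mod p)"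
definition "offQ i = (i - p) mod q"

lemma p0: "0 < p" using q0 qp by auto
lemma pmp: "p \<le> m*p" using m0 by simp
lemma qmp: "q \<le> m*p" using qp pmp by linarith
lemma N0N: "N0 \<le> N"
  unfolding N0_def N_def
proof -
  obtain k1 where k: "k = Suc k1" using k0 gr0_implies_Suc by blast
  have "k1 * q \<le> k1 * (m*p)" using qmp by simp
  then show "k * q + m * p \<le> k * m * p + q" by (simp add: k algebra_simps)
qed
lemma pad: "pad_size (k*m) k p q = N - N0"
proof -
  obtain k1 where k: "k = Suc k1" using k0 gr0_implies_Suc by blast
  have a: "k1 * q \<le> k1 * m * p" using qmp by (simp add: mult.assoc)
  have d: "k * m div k = m" using k0 by simp
  have "(k*m - m) = k1 * m" by (simp add: k)
  then have "pad_size (k*m) k p q = k1 * m * p + q - k * q" unfolding pad_size_def d by simp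
  also have "\<dots> = k1 * m * p - k1 * q" using a by (simp add: k)
  also have "\<dots> = N - N0" unfolding N_def N0_def using a by (simp add: k algebra_simps)
  finally show ?thesis .
qed
lemma pkqN0: "p + k*q \<le> N0" unfolding N0_def using pmp by linarith

lemma isP_not_isQ: "isP i \<Longrightarrow> \<not> isQ i" unfolding isP_def isQ_def by auto
lemma offP_lt: "offP i < p" unfolding offP_def using p0 by auto
lemma offQ_lt: "offQ i < q" unfolding offQ_def using q0 by auto
lemma offP_small[simp]: "i < p \<Longrightarrow> offP i = i" unfolding offP_def by auto
lemma offQ_small[simp]: "p \<le> i \<Longrightarrow> i < p + q \<Longrightarrow> offQ i = i - p" unfolding offQ_def by auto
lemma isP_N: "isP i \<Longrightarrow> i < N" unfolding isP_def using N0N pkqN0 by auto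
lemma isQ_N: "isQ i \<Longrightarrow> i < N" unfolding isQ_def using N0N pkqN0 by auto

lemma dimFk: "dim_row (Fk (k*m) k B) = N0" "dim_col (Fk (k*m) k B) = N0"
  unfolding Fk_def N0_def using B k0 by (auto simp: Let_def)

definition "Am = mat N N (\<lambda>(i,j). if isP i \<and> isQ j then B $$ (offP i, offQ j)
   else if isQ i \<and> isP j then B $$ (offP j, offQ i) else 0)"

lemma A_eq: "dsum (Fk (k*m) k B) (0\<^sub>m (pad_size (k*m) k p q) (pad_size (k*m) k p q)) = Am"
proof -
  have [simp]: "dim_row B = p" "dim_col B = q" using B by auto
  have e: "Fk (k*m) k B $$ (i,j) = (if isP i \<and> isQ j then B $$ (offP i, offQ j)
   else if isQ i \<and> isP j then B $$ (offP j, offQ i) else 0)" if "i < N0" "j < N0" for i j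
  proof -
    have d: "k * m div k = m" using k0 by simp
    have c: "(i < p \<or> p + k * q \<le> i) = isP i" "(j < p \<or> p + k * q \<le> j) = isP j"
      "(\<not> isP i) = isQ i" "(\<not> isP j) = isQ j"
      using that unfolding isP_def isQ_def by auto
    have "Fk (k*m) k B $$ (i,j) = (if (i < p \<or> p + k * q \<le> i) \<and> \<not> (j < p \<or> p + k * q \<le> j) then B $$ (offP i, offQ j)
        else if \<not> (i < p \<or> p + k * q \<le> i) \<and> (j < p \<or> p + k * q \<le> j) then B $$ (offP j, offQ i)
        else 0)" unfolding Fk_def Let_def carrier_matD[OF B] d offP_def offQ_def
      using that unfolding N0_def by (subst index_mat(1)) (auto split del: if_split)
    then show ?thesis unfolding c by (simp split del: if_split)
  qed
  let ?F = "Fk (k*m) k B"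
  have dd: "dsum ?F (0\<^sub>m (N - N0) (N - N0)) $$ (i,j) = (if i < N0 \<and> j < N0 then ?F $$ (i,j) else 0)"
    if "i < N" "j < N" for i j
  proof -
    have s: "N0 + (N - N0) = N" using N0N by simp
    show ?thesis unfolding dsum_def using that by (subst index_mat_four_block) (auto simp: dimFk s)
  qed
  have dims: "dim_row (dsum ?F (0\<^sub>m (N - N0) (N - N0))) = N" "dim_col (dsum ?F (0\<^sub>m (N - N0) (N - N0))) = N"
    unfolding dsum_def using N0N by (auto simp: dimFk)
  show ?thesis unfolding pad
  proof (rule eq_matI)
    fix i j assume "i < dim_row Am" "j < dim_col Am"
    hence ij: "i < N" "j < N" by (auto simp: Am_def)
    show "dsum ?F (0\<^sub>m (N - N0) (N - N0)) $$ (i,j) = Am $$ (i,j)"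
    proof (cases "i < N0 \<and> j < N0")
      case True then show ?thesis using ij by (simp add: dd[OF ij] e Am_def)
    next
      case False
      have "isP x \<Longrightarrow> x < N0" "isQ x \<Longrightarrow> x < N0" for x using pkqN0 unfolding isP_def isQ_def by auto
      then show ?thesis using False ij by (auto simp: Am_def dd[OF ij])
    qed
  qed (auto simp: dims Am_def)
qed


lemma pqN: "p + q \<le> N"
proof -
  have "p \<le> (k*m)*p" using k0 m0 by simp
  then show ?thesis unfolding N_def by linarith
qed

lemma SP: assumes r: "r < p"
  shows "{l \<in> {0..<N}. isP l \<and> offP l = r} = insert r ((\<lambda>t. p + k*q + r + t*p) ` {..<m-1})"
proof (intro equalityI subsetI)
  obtain m1 where m: "m = Suc m1" using m0 gr0_implies_Suc by blast
  fix l assume "l \<in> {l \<in> {0..<N}. isP l \<and> offP l = r}"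
  hence l: "l < N" "isP l" "offP l = r" by auto
  show "l \<in> insert r ((\<lambda>t. p + k*q + r + t*p) ` {..<m-1})"
  proof (cases "l < p")
    case True then show ?thesis using l by simp
  next
    case False
    hence l2: "p + k*q \<le> l" "l < N0" using l(2) unfolding isP_def by auto
    define u where "u = l - p - k*q"
    have um: "u mod p = r" using l(3) False unfolding offP_def u_def by simp
    have "N0 = k*q + p + m1*p" using m unfolding N0_def by simp
    hence "u < m1*p" using l2 unfolding u_def by linarith
    hence ud: "u div p < m1" by (simp add: div_less_iff_less_mult p0)
    have "l = p + k*q + r + (u div p)*p" using um l2 div_mult_mod_eq[of u p] unfolding u_def by linarith
    then show ?thesis using ud m by auto
  qed
next
  obtain m1 where m: "m = Suc m1" using m0 gr0_implies_Suc by blast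
  fix l assume "l \<in> insert r ((\<lambda>t. p + k*q + r + t*p) ` {..<m-1})"
  then show "l \<in> {l \<in> {0..<N}. isP l \<and> offP l = r}"
  proof
    assume "l = r" then show ?thesis using r isP_N by (auto simp: isP_def)
  next
    assume "l \<in> (\<lambda>t. p + k*q + r + t*p) ` {..<m-1}"
    then obtain t where t: "t < m1" and l: "l = p + k*q + r + t*p" using m by auto
    have "Suc t * p \<le> m1 * p" using t by (intro mult_le_mono1) simp
    hence "r + t*p < m1*p" using r by simp
    moreover have "N0 = k*q + p + m1*p" using m unfolding N0_def by simp
    ultimately have lN0: "l < N0" unfolding l by linarith
    have "isP l" unfolding isP_def using lN0 l by simp
    moreover have "offP l = r" unfolding offP_def l using r p0 by simp
    ultimately show ?thesis using lN0 N0N by simp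
  qed
qed

lemma cardSP: assumes r: "r < p" shows "card {l \<in> {0..<N}. isP l \<and> offP l = r} = m"
proof -
  have inj: "inj_on (\<lambda>t. p + k*q + r + t*p) {..<m-1}" using p0 by (auto simp: inj_on_def)
  have "r \<notin> (\<lambda>t. p + k*q + r + t*p) ` {..<m-1}" using r by auto
  then show ?thesis unfolding SP[OF r] using card_image[OF inj] m0 by simp
qed

lemma SQ: assumes r: "r < q"
  shows "{l \<in> {0..<N}. isQ l \<and> offQ l = r} = (\<lambda>t. p + r + t*q) ` {..<k}"
proof (intro equalityI subsetI)
  fix l assume "l \<in> {l \<in> {0..<N}. isQ l \<and> offQ l = r}"
  hence l: "isQ l" "offQ l = r" by auto
  define u where "u = l - p"
  have um: "u mod q = r" using l(2) unfolding offQ_def u_def by simp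
  have "u < k*q" using l(1) unfolding u_def isQ_def by linarith
  hence ud: "u div q < k" by (simp add: div_less_iff_less_mult q0 mult.commute)
  have "l = p + r + (u div q)*q" using um l(1) div_mult_mod_eq[of u q] unfolding u_def isQ_def by linarith
  then show "l \<in> (\<lambda>t. p + r + t*q) ` {..<k}" using ud by auto
next
  fix l assume "l \<in> (\<lambda>t. p + r + t*q) ` {..<k}"
  then obtain t where t: "t < k" and l: "l = p + r + t*q" by auto
  have "Suc t * q \<le> k * q" using t by (intro mult_le_mono1) simp
  hence "r + t*q < k*q" using r by simp
  hence "isQ l" unfolding isQ_def l by simp
  moreover have "offQ l = r" unfolding offQ_def l using r by simp
  ultimately show "l \<in> {l \<in> {0..<N}. isQ l \<and> offQ l = r}" using isQ_N by simp
qed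

lemma cardSQ: assumes r: "r < q" shows "card {l \<in> {0..<N}. isQ l \<and> offQ l = r} = k"
proof -
  have inj: "inj_on (\<lambda>t. p + r + t*q) {..<k}" using q0 by (auto simp: inj_on_def)
  then show ?thesis unfolding SQ[OF r] using card_image[OF inj] by simp
qed

lemma sumP: assumes "r < p"
  shows "(\<Sum>l\<in>{0..<N}. if isP l \<and> offP l = r then c else 0) = of_nat m * (c::complex)"
proof -
  have "(\<Sum>l\<in>{0..<N}. if isP l \<and> offP l = r then c else 0) = (\<Sum>l\<in>{l \<in> {0..<N}. isP l \<and> offP l = r}. c)"
    by (rule sum.inter_filter[symmetric]) simp
  also have "\<dots> = of_nat (card {l \<in> {0..<N}. isP l \<and> offP l = r}) * c" by (rule sum_constant)
  finally show ?thesis unfolding cardSP[OF assms] .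
qed

lemma sumQ: assumes "r < q"
  shows "(\<Sum>l\<in>{0..<N}. if isQ l \<and> offQ l = r then c else 0) = of_nat k * (c::complex)"
proof -
  have "(\<Sum>l\<in>{0..<N}. if isQ l \<and> offQ l = r then c else 0) = (\<Sum>l\<in>{l \<in> {0..<N}. isQ l \<and> offQ l = r}. c)"
    by (rule sum.inter_filter[symmetric]) simp
  also have "\<dots> = of_nat (card {l \<in> {0..<N}. isQ l \<and> offQ l = r}) * c" by (rule sum_constant)
  finally show ?thesis unfolding cardSQ[OF assms] .
qed

lemma sumD: assumes "a < N"
  shows "(\<Sum>l\<in>{0..<N}. if l = a then c else 0) = (c::complex)"
  using assms by simp


definition "af i j = (if isP i \<and> isQ j then B $$ (offP i, offQ j)
   else if isQ i \<and> isP j then B $$ (offP j, offQ i) else 0)"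
definition "tf i j = (if i < p then (if isP j \<and> offP j = i then of_nat k else 0)
   else if i < p + q then (if isQ j \<and> offQ j = i - p then 1 else 0)
   else (if i = j then 1 else (0::complex)))"
definition "gf i j = (if i < p then (if p \<le> j \<and> j < p + q then of_nat (k*m) * B $$ (i, j - p) else 0)
   else if i < p + q then (if j < p then B $$ (j, i - p) else 0)
   else if isP i then (if p \<le> j \<and> j < p + q then B $$ (offP i, j - p) else 0)
   else if isQ i then (if j < p then B $$ (j, offQ i) / of_nat k else 0)
   else 0)"
definition "Tm = mat N N (\<lambda>(i,j). tf i j)"
definition "Gm = mat N N (\<lambda>(i,j). gf i j)"

lemma Am_idx: "i < N \<Longrightarrow> j < N \<Longrightarrow> Am $$ (i,j) = af i j" unfolding Am_def af_def by simp
lemma Am_carrier: "Am \<in> carrier_mat N N" unfolding Am_def by simp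
lemma Tm_carrier: "Tm \<in> carrier_mat N N" unfolding Tm_def by simp
lemma Gm_carrier: "Gm \<in> carrier_mat N N" unfolding Gm_def by simp

lemma mult_idx: "X \<in> carrier_mat N N \<Longrightarrow> Y \<in> carrier_mat N N \<Longrightarrow> i < N \<Longrightarrow> j < N \<Longrightarrow>
  (X * Y) $$ (i,j) = (\<Sum>l\<in>{0..<N}. X $$ (i,l) * Y $$ (l,j))"
  by (auto simp: scalar_prod_def intro!: sum.cong)

lemma entry_eq: assumes i: "i < N" and j: "j < N"
  shows "(\<Sum>l\<in>{0..<N}. tf i l * af l j) = (\<Sum>l\<in>{0..<N}. gf i l * tf l j)"
proof -
  have oq: "offQ j < q" by (rule offQ_lt)
  have op: "offP j < p" by (rule offP_lt)
  have pqN': "p + offQ j < N" using oq pqN by linarith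
  have opN: "offP j < N" using op pqN by linarith
  have k0': "(of_nat k :: complex) \<noteq> 0" using k0 by simp
  show ?thesis
  proof (cases "i < p")
    case True
    let ?V = "if isQ j then B $$ (i, offQ j) else 0"
    have "(\<Sum>l\<in>{0..<N}. tf i l * af l j) = (\<Sum>l\<in>{0..<N}. if isP l \<and> offP l = i then of_nat k * ?V else 0)"
      by (rule sum.cong) (auto simp: tf_def af_def True dest: isP_not_isQ)
    also have "\<dots> = of_nat m * (of_nat k * ?V)" by (rule sumP[OF True])
    finally have L: "(\<Sum>l\<in>{0..<N}. tf i l * af l j) = of_nat (k*m) * ?V" by simp
    have "(\<Sum>l\<in>{0..<N}. gf i l * tf l j) = (\<Sum>l\<in>{0..<N}. if l = p + offQ j then (if isQ j then of_nat (k*m) * B $$ (i, offQ j) else 0) else 0)"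
      by (rule sum.cong) (use oq in \<open>auto simp: tf_def gf_def True\<close>)
    also have "\<dots> = of_nat (k*m) * ?V" using pqN' by simp
    finally show ?thesis using L by simp
  next
    case F1: False
    show ?thesis
    proof (cases "i < p + q")
      case True
      let ?V = "if isP j then B $$ (offP j, i - p) else 0"
      have r: "i - p < q" using True F1 by linarith
      have "(\<Sum>l\<in>{0..<N}. tf i l * af l j) = (\<Sum>l\<in>{0..<N}. if isQ l \<and> offQ l = i - p then ?V else 0)"
        by (rule sum.cong) (use True F1 in \<open>auto simp: tf_def af_def dest: isP_not_isQ\<close>)
      also have "\<dots> = of_nat k * ?V" by (rule sumQ[OF r])
      finally have L: "(\<Sum>l\<in>{0..<N}. tf i l * af l j) = of_nat k * ?V" .
      have "(\<Sum>l\<in>{0..<N}. gf i l * tf l j) = (\<Sum>l\<in>{0..<N}. if l = offP j then (if isP j then B $$ (offP j, i - p) * of_nat k else 0) else 0)"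
        by (rule sum.cong) (use op True F1 in \<open>auto simp: tf_def gf_def\<close>)
      also have "\<dots> = of_nat k * ?V" using opN by simp
      finally show ?thesis using L by simp
    next
      case F2: False
      have "(\<Sum>l\<in>{0..<N}. tf i l * af l j) = (\<Sum>l\<in>{0..<N}. if l = i then af i j else 0)"
        by (rule sum.cong) (use F1 F2 in \<open>auto simp: tf_def\<close>)
      also have "\<dots> = af i j" using i by simp
      finally have L: "(\<Sum>l\<in>{0..<N}. tf i l * af l j) = af i j" .
      show ?thesis
      proof (cases "isP i")
        case True
        let ?V = "if isQ j then B $$ (offP i, offQ j) else 0"
        have "(\<Sum>l\<in>{0..<N}. gf i l * tf l j) = (\<Sum>l\<in>{0..<N}. if l = p + offQ j then ?V else 0)"
          by (rule sum.cong) (use oq True F1 F2 in \<open>auto simp: tf_def gf_def\<close>)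
        also have "\<dots> = ?V" using pqN' by simp
        also have "\<dots> = af i j" using True by (auto simp: af_def dest: isP_not_isQ)
        finally show ?thesis using L by simp
      next
        case nP: False
        show ?thesis
        proof (cases "isQ i")
          case True
          let ?V = "if isP j then B $$ (offP j, offQ i) else 0"
          have "(\<Sum>l\<in>{0..<N}. gf i l * tf l j) = (\<Sum>l\<in>{0..<N}. if l = offP j then ?V else 0)"
            by (rule sum.cong) (use op True nP F1 F2 k0' in \<open>auto simp: tf_def gf_def\<close>)
          also have "\<dots> = ?V" using opN by simp
          also have "\<dots> = af i j" using True nP by (auto simp: af_def)
          finally show ?thesis using L by simp
        next
          case False
          have "(\<Sum>l\<in>{0..<N}. gf i l * tf l j) = 0"
            by (rule sum.neutral) (use False nP F1 F2 in \<open>auto simp: gf_def\<close>)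
          moreover have "af i j = 0" using False nP by (auto simp: af_def)
          ultimately show ?thesis using L by simp
        qed
      qed
    qed
  qed
qed

lemma TA_GT: "Tm * Am = Gm * Tm"
proof (rule eq_matI)
  fix i j assume "i < dim_row (Gm * Tm)" "j < dim_col (Gm * Tm)"
  hence ij: "i < N" "j < N" by (auto simp: Gm_def Tm_def)
  have "(Tm * Am) $$ (i,j) = (\<Sum>l\<in>{0..<N}. tf i l * af l j)"
    using ij by (subst mult_idx[OF Tm_carrier Am_carrier]) (auto simp: Tm_def Am_idx intro!: sum.cong)
  also have "\<dots> = (\<Sum>l\<in>{0..<N}. gf i l * tf l j)" by (rule entry_eq[OF ij])
  also have "\<dots> = (Gm * Tm) $$ (i,j)"
    using ij by (subst mult_idx[OF Gm_carrier Tm_carrier]) (auto simp: Tm_def Gm_def intro!: sum.cong)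
  finally show "(Tm * Am) $$ (i,j) = (Gm * Tm) $$ (i,j)" .
qed (auto simp: Gm_def Tm_def Am_def)


lemma Tm_ut: "upper_triangular Tm"
  unfolding upper_triangular_def
proof (intro allI impI)
  fix i j assume i: "i < dim_row Tm" and ji: "j < i"
  show "Tm $$ (i,j) = 0"
  proof -
    have "i < N" using i by (simp add: Tm_def)
    hence "Tm $$ (i,j) = tf i j" using ji by (simp add: Tm_def)
    also have "\<dots> = 0" using ji unfolding tf_def
      by (auto simp: offP_def offQ_def isQ_def)
    finally show ?thesis .
  qed
qed

lemma Tm_det: "det Tm \<noteq> 0"
proof -
  have "det Tm = prod_list (diag_mat Tm)" by (rule det_upper_triangular[OF Tm_ut Tm_carrier])
  moreover have "0 \<notin> set (diag_mat Tm)"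
  proof
    assume "0 \<in> set (diag_mat Tm)"
    then obtain i where i: "i < N" and z: "Tm $$ (i,i) = 0" by (auto simp: diag_mat_def Tm_def)
    have "tf i i = 0" using z i by (simp add: Tm_def)
    moreover have "q \<le> k*q" using k0 by simp
    hence "i < p + q \<longrightarrow> i < p + k*q" by linarith
    ultimately show False using k0 unfolding tf_def by (auto simp: isP_def isQ_def split: if_splits)
  qed
  ultimately show ?thesis by (simp add: prod_list_zero_iff)
qed

lemma Tm_inv: obtains Q where "Tm * Q = 1\<^sub>m N" "Q * Tm = 1\<^sub>m N" "Q \<in> carrier_mat N N"
proof -
  have u: "Tm \<in> Units (ring_mat TYPE(complex) N ())" by (rule det_non_zero_imp_unit[OF Tm_carrier Tm_det])
  show ?thesis
  proof (cases "mat_inverse Tm")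
    case None then show ?thesis using mat_inverse(1)[OF Tm_carrier, of "()"] u by simp
  next
    case (Some Q) then show ?thesis using mat_inverse(2)[OF Tm_carrier Some] that by blast
  qed
qed

lemma A_sim_G: "similar_mat Am Gm"
proof -
  obtain Q where Q: "Tm * Q = 1\<^sub>m N" "Q * Tm = 1\<^sub>m N" "Q \<in> carrier_mat N N" by (rule Tm_inv)
  have "Am = (Q * Tm) * Am" using Q Am_carrier by simp
  also have "\<dots> = Q * (Tm * Am)" by (rule assoc_mult_mat[OF Q(3) Tm_carrier Am_carrier])
  also have "\<dots> = Q * (Gm * Tm)" by (simp add: TA_GT)
  also have "\<dots> = Q * Gm * Tm" by (rule assoc_mult_mat[OF Q(3) Gm_carrier Tm_carrier, symmetric])
  finally have "Am = Q * Gm * Tm" .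
  then have "similar_mat_wit Am Gm Q Tm"
    by (intro similar_mat_witI[of _ _ N]) (use Q Am_carrier Gm_carrier Tm_carrier in auto)
  then show ?thesis unfolding similar_mat_def by blast
qed

definition "Dm = mat (N - (p+q)) (p+q) (\<lambda>(i,j). gf (i + (p+q)) j)"

lemma G_block: "Gm = four_block_mat (Cmat (k*m) B) (0\<^sub>m (p+q) (N - (p+q))) Dm (0\<^sub>m (N - (p+q)) (N - (p+q)))"
proof -
  have s: "p + q + (N - (p+q)) = N" using pqN by simp
  have C: "Cmat (k*m) B = mat (p+q) (p+q) (\<lambda>(i,j).
     if i < p then (if p \<le> j then of_nat (k*m) * B $$ (i, j - p) else 0)
     else (if j < p then B $$ (j, i - p) else 0))" unfolding Cmat_def Let_def carrier_matD[OF B] by simp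
  show ?thesis
  proof (rule eq_matI)
    fix i j assume "i < dim_row (four_block_mat (Cmat (k*m) B) (0\<^sub>m (p+q) (N - (p+q))) Dm (0\<^sub>m (N - (p+q)) (N - (p+q))))"
       "j < dim_col (four_block_mat (Cmat (k*m) B) (0\<^sub>m (p+q) (N - (p+q))) Dm (0\<^sub>m (N - (p+q)) (N - (p+q))))"
    hence ij: "i < N" "j < N" by (auto simp: C Dm_def s)
    show "Gm $$ (i,j) = four_block_mat (Cmat (k*m) B) (0\<^sub>m (p+q) (N - (p+q))) Dm (0\<^sub>m (N - (p+q)) (N - (p+q))) $$ (i,j)"
      using ij s by (auto simp: C Dm_def Gm_def gf_def)
  qed (auto simp: C Dm_def Gm_def s)
qed

lemma main_cp: "char_poly (dsum (Fk (k*m) k B) (0\<^sub>m (pad_size (k*m) k p q) (pad_size (k*m) k p q)))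
   = char_poly (Cmat (k*m) B) * char_poly (0\<^sub>m (k*m*p + q - (p+q)) (k*m*p + q - (p+q)) :: complex mat)"
proof -
  have C: "Cmat (k*m) B \<in> carrier_mat (p+q) (p+q)" unfolding Cmat_def Let_def carrier_matD[OF B] by simp
  have "char_poly (dsum (Fk (k*m) k B) (0\<^sub>m (pad_size (k*m) k p q) (pad_size (k*m) k p q))) = char_poly Gm"
    unfolding A_eq by (rule char_poly_similar[OF A_sim_G])
  also have "char_poly Gm = char_poly (Cmat (k*m) B) * char_poly (0\<^sub>m (N - (p+q)) (N - (p+q)) :: complex mat)"
    unfolding G_block
    by (rule cp_block) (auto simp: C Dm_def)
  finally show ?thesis unfolding N_def .
qed

lemma main_carrier: "dsum (Fk (k*m) k B) (0\<^sub>m (pad_size (k*m) k p q) (pad_size (k*m) k p q)) \<in> carrier_mat (k*m*p+q) (k*m*p+q)"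
  unfolding A_eq Am_def N_def by simp

end

theorem theorem3p5:
  fixes n p q k k' :: nat and B :: "complex mat"
  assumes "n > 0" and "q > 0" and "p \<ge> q"
    and "B \<in> carrier_mat p q"
    and "k > 0" and "k dvd n" and "k' > 0" and "k' dvd n"
  shows "cospectral (dsum (Fk n k B) (0\<^sub>m (pad_size n k p q) (pad_size n k p q)))
                    (dsum (Fk n k' B) (0\<^sub>m (pad_size n k' p q) (pad_size n k' p q)))"
proof -
  define m where "m = n div k"
  define m' where "m' = n div k'"
  have km: "k * m = n" unfolding m_def using assms(6) by simp
  have km': "k' * m' = n" unfolding m'_def using assms(8) by simp
  have m0: "m > 0" using km assms(1) by (cases m) auto
  have m0': "m' > 0" using km' assms(1) by (cases m') auto
  interpret I1: fsetup B p q k m by unfold_locales (use assms m0 in auto)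
  interpret I2: fsetup B p q k' m' by unfold_locales (use assms m0' in auto)
  have c1: "char_poly (dsum (Fk n k B) (0\<^sub>m (pad_size n k p q) (pad_size n k p q)))
     = char_poly (Cmat n B) * char_poly (0\<^sub>m (n*p + q - (p+q)) (n*p + q - (p+q)) :: complex mat)"
    using I1.main_cp unfolding km .
  have c2: "char_poly (dsum (Fk n k' B) (0\<^sub>m (pad_size n k' p q) (pad_size n k' p q)))
     = char_poly (Cmat n B) * char_poly (0\<^sub>m (n*p + q - (p+q)) (n*p + q - (p+q)) :: complex mat)"
    using I2.main_cp unfolding km' .
  have d1: "dsum (Fk n k B) (0\<^sub>m (pad_size n k p q) (pad_size n k p q)) \<in> carrier_mat (n*p+q) (n*p+q)"
    using I1.main_carrier unfolding km .
  have d2: "dsum (Fk n k' B) (0\<^sub>m (pad_size n k' p q) (pad_size n k' p q)) \<in> carrier_mat (n*p+q) (n*p+q)"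
    using I2.main_carrier unfolding km' .
  show ?thesis unfolding cospectral_def c1 c2 using d1 d2 by (auto simp: square_mat.simps)
qed

end
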